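(* Let $G$ be a finite nilpotent group and let $\mathcal F$ be a family of subgroups of $G$ which contains $G$ and all the maximal subgroups of $G$ and is closed under taking intersections. Let $\mathcal C: X_t<X_{t-1}<\dots<X_1<X_0$ be a chain of elements of $\mathcal F$. If $\mathcal C$ cannot be refined in $\mathcal F$ (i.e. no element of $\mathcal F$ can be added to $\mathcal C$ so that the result is still a chain), then $t\geq u$, where $u$ is the composition length of $G/\Phi(G)$ and $\Phi(G)$ is the Frattini subgroup of $G$. *)

theory Defs
  imports "HOL-Algebra.Algebra"
begin

definition commutator_subgroup :: "('a, 'b) monoid_scheme \<Rightarrow> 'a set \<Rightarrow> 'a set \<Rightarrow> 'a set" where
  "commutator_subgroup G A B = generate G
     (\<Union>a \<in> A. \<Union>b \<in> B. { a \<otimes>\<^bsub>G\<^esub> b \<otimes>\<^bsub>G\<^esub> inv\<^bsub>G\<^esub> a \<otimes>\<^bsub>G\<^esub> inv\<^bsub>G\<^esub> b })"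

fun lower_central :: "('a, 'b) monoid_scheme \<Rightarrow> nat \<Rightarrow> 'a set" where
  "lower_central G 0 = carrier G"
| "lower_central G (Suc n) = commutator_subgroup G (carrier G) (lower_central G n)"

definition nilpotent_group :: "('a, 'b) monoid_scheme \<Rightarrow> bool" where
  "nilpotent_group G \<longleftrightarrow> group G \<and> (\<exists>n. lower_central G n = {\<one>\<^bsub>G\<^esub>})"

definition maximal_subgroup :: "('a, 'b) monoid_scheme \<Rightarrow> 'a set \<Rightarrow> bool" where
  "maximal_subgroup G H \<longleftrightarrow> subgroup H G \<and> H \<noteq> carrier G \<and>
     (\<forall>K. subgroup K G \<and> H \<subseteq> K \<longrightarrow> K = H \<or> K = carrier G)"

text \<open>Frattini subgroup: intersection of all maximal subgroups (= G if there are none).\<close>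
definition frattini :: "('a, 'b) monoid_scheme \<Rightarrow> 'a set" where
  "frattini G = carrier G \<inter> \<Inter> {H. maximal_subgroup G H}"

text \<open>A composition series of Q, as a list Q = H_0 > H_1 > ... > H_n = 1, each H_(i+1)
  normal in H_i with simple factor H_i / H_(i+1). Its length is n = length Hs - 1.\<close>
definition composition_series :: "('c, 'd) monoid_scheme \<Rightarrow> 'c set list \<Rightarrow> bool" where
  "composition_series Q Hs \<longleftrightarrow> Hs \<noteq> [] \<and> hd Hs = carrier Q \<and> last Hs = {\<one>\<^bsub>Q\<^esub>} \<and>
     (\<forall>i < length Hs. subgroup (Hs ! i) Q) \<and>
     (\<forall>i. Suc i < length Hs \<longrightarrow>
        Hs ! Suc i \<lhd> subgroup_generated Q (Hs ! i) \<and>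
        simple_group (subgroup_generated Q (Hs ! i) Mod (Hs ! Suc i)))"

end

theory Submission
  imports Defs "HOL-Algebra.SndIsomorphismGrp" "HOL-Algebra.Sylow"
begin

context group begin

lemma order_Mod: "order (Q Mod N) = card (rcosets\<^bsub>Q\<^esub> N)"
  by (simp add: order_def FactGroup_def)

lemma prod_formula:
  assumes "H \<lhd> G" "subgroup S G" "finite (carrier G)"
  shows "card (H <#> S) * card (H \<inter> S) = card H * card S"
proof -
  interpret second_isomorphism_grp H G S
    using assms unfolding second_isomorphism_grp_def second_isomorphism_grp_axioms_def by auto
  have e: "order ((G\<lparr>carrier := S\<rparr>) Mod (H \<inter> S)) = order ((G\<lparr>carrier := H <#> S\<rparr>) Mod H)"
    using normal_intersection_quotient_isom iso_same_order by blast
  have gS: "group (G\<lparr>carrier := S\<rparr>)" using assms(2) subgroup_imp_group by blast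
  have sub1: "subgroup (H \<inter> S) (G\<lparr>carrier := S\<rparr>)"
    using normal_subgrp_intersection_normal normal_imp_subgroup by (metis Int_commute)
  have l1: "card (rcosets\<^bsub>G\<lparr>carrier := S\<rparr>\<^esub> (H \<inter> S)) * card (H \<inter> S) = card S"
    using group.lagrange[OF gS sub1] by (simp add: order_def)
  have HS: "subgroup (H <#> S) G" by (rule normal_set_mult_subgroup)
  have gHS: "group (G\<lparr>carrier := H <#> S\<rparr>)" using HS subgroup_imp_group by blast
  have sub2: "subgroup H (G\<lparr>carrier := H <#> S\<rparr>)"
    using subgroup_incl[OF is_subgroup HS H_contained_in_set_mult] .
  have l2: "card (rcosets\<^bsub>G\<lparr>carrier := H <#> S\<rparr>\<^esub> H) * card H = card (H <#> S)"
    using group.lagrange[OF gHS sub2] by (simp add: order_def)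
  from e have e2: "card (rcosets\<^bsub>G\<lparr>carrier := S\<rparr>\<^esub> (H \<inter> S)) = card (rcosets\<^bsub>G\<lparr>carrier := H <#> S\<rparr>\<^esub> H)"
    by (simp add: order_Mod)
  show ?thesis using l1 l2 e2 by (metis mult.assoc mult.commute)
qed

lemma prime_index_maximal:
  assumes "subgroup N G" "finite (carrier G)" "Factorial_Ring.prime q" "card (carrier G) = q * card N"
  shows "maximal_subgroup G N"
  unfolding maximal_subgroup_def
proof (intro conjI allI impI)
  show "subgroup N G" by fact
  have "card N > 0" using assms by (metis card_gt_0_iff finite_subset subgroup.subset subgroup.one_closed empty_iff)
  moreover have "q > 1" using assms(3) prime_gt_1_nat by blast
  ultimately show "N \<noteq> carrier G" using assms(4) by auto
  fix K assume K: "subgroup K G \<and> N \<subseteq> K"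
  have gK: "group (G\<lparr>carrier := K\<rparr>)" using K subgroup_imp_group by blast
  have sNK: "subgroup N (G\<lparr>carrier := K\<rparr>)" using subgroup_incl K assms(1) by blast
  have l1: "card (rcosets\<^bsub>G\<lparr>carrier := K\<rparr>\<^esub> N) * card N = card K"
    using group.lagrange[OF gK sNK] by (simp add: order_def)
  have l2: "card (rcosets K) * card K = card (carrier G)"
    using lagrange K by (simp add: order_def)
  have fK: "finite K" using K assms(2) finite_subset subgroup.subset by metis
  have "card N > 0" using assms by (metis card_gt_0_iff finite_subset subgroup.subset subgroup.one_closed empty_iff)
  have "q * card N = card (rcosets K) * card K" using l2 assms(4) by simp
  also have "\<dots> = (card (rcosets\<^bsub>G\<lparr>carrier := K\<rparr>\<^esub> N) * card (rcosets K)) * card N"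
    by (subst l1[symmetric]) (simp add: ac_simps)
  finally have "q * card N = (card (rcosets\<^bsub>G\<lparr>carrier := K\<rparr>\<^esub> N) * card (rcosets K)) * card N" .
  then have "q = card (rcosets\<^bsub>G\<lparr>carrier := K\<rparr>\<^esub> N) * card (rcosets K)"
    using \<open>card N > 0\<close> by simp
  then have "card (rcosets\<^bsub>G\<lparr>carrier := K\<rparr>\<^esub> N) = 1 \<or> card (rcosets K) = 1"
    using assms(3) using prime_product by blast
  then show "K = N \<or> K = carrier G"
  proof
    assume "card (rcosets\<^bsub>G\<lparr>carrier := K\<rparr>\<^esub> N) = 1"
    then have "card N = card K" using l1 by simp
    then show ?thesis using K fK by (metis card_subset_eq)
  next
    assume "card (rcosets K) = 1"
    then have "card K = card (carrier G)" using l2 by simp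
    then show ?thesis using K assms(2) by (metis card_subset_eq subgroup.subset)
  qed
qed

end

context group begin

lemma lower_central_sub: "lower_central G n \<subseteq> carrier G"
proof (induction n)
  case 0 then show ?case by simp
next
  case (Suc n)
  have "(\<Union>a \<in> carrier G. \<Union>b \<in> lower_central G n. { a \<otimes> b \<otimes> inv a \<otimes> inv b }) \<subseteq> carrier G"
    using Suc by auto
  then show ?case unfolding lower_central.simps commutator_subgroup_def
    by (rule subgroup.subset[OF generate_is_subgroup])
qed

lemma lower_central_subgroup: "subgroup (lower_central G n) G"
proof (cases n)
  case 0 then show ?thesis by (simp add: subgroup_self)
next
  case (Suc m)
  have "(\<Union>a \<in> carrier G. \<Union>b \<in> lower_central G m. { a \<otimes> b \<otimes> inv a \<otimes> inv b }) \<subseteq> carrier G"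
    using lower_central_sub[of m] by auto
  then show ?thesis unfolding Suc lower_central.simps commutator_subgroup_def
    by (rule generate_is_subgroup)
qed

lemma lower_central_comm:
  assumes "a \<in> carrier G" "b \<in> lower_central G n"
  shows "a \<otimes> b \<otimes> inv a \<otimes> inv b \<in> lower_central G (Suc n)"
  unfolding lower_central.simps commutator_subgroup_def
  by (rule generate.incl) (use assms in blast)

lemma maximal_normal:
  assumes nil: "nilpotent_group G" and M: "maximal_subgroup G M"
  shows "M \<lhd> G"
proof -
  from nil obtain n where n: "lower_central G n = {\<one>}" unfolding nilpotent_group_def by blast
  have sM: "subgroup M G" and MG: "M \<noteq> carrier G"
    and mx: "\<And>K. subgroup K G \<Longrightarrow> M \<subseteq> K \<Longrightarrow> K = M \<or> K = carrier G"
    using M unfolding maximal_subgroup_def by auto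
  have Mc: "M \<subseteq> carrier G" using sM subgroup.subset by blast
  have "lower_central G n \<subseteq> M" using n sM subgroup.one_closed by auto
  then have ex: "\<exists>j. lower_central G j \<subseteq> M" by blast
  define k' where "k' = (LEAST j. lower_central G j \<subseteq> M)"
  have k'M: "lower_central G k' \<subseteq> M" unfolding k'_def by (rule LeastI_ex[OF ex])
  have k'0: "k' \<noteq> 0" using k'M MG Mc by auto
  then obtain k where kk: "k' = Suc k" using not0_implies_Suc by blast
  have "k < k'" using kk by simp
  then have kM: "\<not> lower_central G k \<subseteq> M" unfolding k'_def by (rule not_less_Least)
  have conj: "c \<otimes> m \<otimes> inv c \<in> M" if c: "c \<in> lower_central G k" and m: "m \<in> M" for c m
  proof -
    have cc: "c \<in> carrier G" using c lower_central_sub by blast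
    have mc: "m \<in> carrier G" using m Mc by blast
    have "m \<otimes> c \<otimes> inv m \<otimes> inv c \<in> M" using lower_central_comm[OF mc c] k'M kk by blast
    then have "inv (m \<otimes> c \<otimes> inv m \<otimes> inv c) \<otimes> m \<in> M" using sM m
      by (simp add: subgroup.m_closed subgroup.m_inv_closed)
    also have "inv (m \<otimes> c \<otimes> inv m \<otimes> inv c) \<otimes> m = c \<otimes> m \<otimes> inv c"
      using cc mc by (simp add: inv_mult_group m_assoc)
    finally show ?thesis .
  qed
  define Nz where "Nz = {g \<in> carrier G. \<forall>m \<in> M. g \<otimes> m \<otimes> inv g \<in> M \<and> inv g \<otimes> m \<otimes> g \<in> M}"
  have sN: "subgroup Nz G"
  proof (rule subgroupI)
    show "Nz \<subseteq> carrier G" unfolding Nz_def by auto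
    have "\<one> \<in> Nz" unfolding Nz_def using Mc by (simp add: subset_iff)
    then show "Nz \<noteq> {}" by blast
    fix g assume g: "g \<in> Nz"
    then show "inv g \<in> Nz" unfolding Nz_def by auto
  next
    fix g h assume g: "g \<in> Nz" and h: "h \<in> Nz"
    have gc: "g \<in> carrier G" and hc: "h \<in> carrier G" using g h unfolding Nz_def by auto
    show "g \<otimes> h \<in> Nz" unfolding Nz_def
    proof (intro CollectI conjI ballI)
      show "g \<otimes> h \<in> carrier G" using gc hc by simp
      fix m assume m: "m \<in> M"
      have mc: "m \<in> carrier G" using m Mc by blast
      have "h \<otimes> m \<otimes> inv h \<in> M" using h m unfolding Nz_def by auto
      then have "g \<otimes> (h \<otimes> m \<otimes> inv h) \<otimes> inv g \<in> M" using g unfolding Nz_def by auto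
      then show "g \<otimes> h \<otimes> m \<otimes> inv (g \<otimes> h) \<in> M"
        using gc hc mc by (simp add: inv_mult_group m_assoc)
      have "inv g \<otimes> m \<otimes> g \<in> M" using g m unfolding Nz_def by auto
      then have "inv h \<otimes> (inv g \<otimes> m \<otimes> g) \<otimes> h \<in> M" using h unfolding Nz_def by auto
      then show "inv (g \<otimes> h) \<otimes> m \<otimes> (g \<otimes> h) \<in> M"
        using gc hc mc by (simp add: inv_mult_group m_assoc)
    qed
  qed
  have MN: "M \<subseteq> Nz" unfolding Nz_def
    using Mc sM by (auto simp: subgroup.m_closed subgroup.m_inv_closed)
  have LN: "lower_central G k \<subseteq> Nz"
  proof
    fix c assume c: "c \<in> lower_central G k"
    have cc: "c \<in> carrier G" using c lower_central_sub by blast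
    have ic: "inv c \<in> lower_central G k" using subgroup.m_inv_closed[OF lower_central_subgroup c] .
    have "\<forall>m\<in>M. inv c \<otimes> m \<otimes> c \<in> M"
    proof
      fix m assume "m \<in> M"
      from conj[OF ic this] show "inv c \<otimes> m \<otimes> c \<in> M" using cc by simp
    qed
    then show "c \<in> Nz" unfolding Nz_def using conj[OF c] cc by blast
  qed
  have "Nz \<noteq> M" using LN kM by blast
  then have "Nz = carrier G" using mx[OF sN MN] by blast
  have "\<forall>x\<in>carrier G. \<forall>h\<in>M. x \<otimes> h \<otimes> inv x \<in> M"
  proof (intro ballI)
    fix x h assume "x \<in> carrier G" "h \<in> M"
    then have "x \<in> Nz" using \<open>Nz = carrier G\<close> by simp
    then show "x \<otimes> h \<otimes> inv x \<in> M" unfolding Nz_def using \<open>h \<in> M\<close> by blast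
  qed
  then show ?thesis using normal_inv_iff sM by blast
qed

end

context group begin

lemma maximal_prime_index:
  assumes nil: "nilpotent_group G" and fin: "finite (carrier G)" and M: "maximal_subgroup G M"
  shows "\<exists>p. Factorial_Ring.prime p \<and> card (carrier G) = p * card M"
proof -
  have nM: "M \<lhd> G" using maximal_normal[OF nil M] .
  interpret N: normal M G by (rule nM)
  have sM: "subgroup M G" and MG: "M \<noteq> carrier G"
    and mx: "\<And>K. subgroup K G \<Longrightarrow> M \<subseteq> K \<Longrightarrow> K = M \<or> K = carrier G"
    using M unfolding maximal_subgroup_def by auto
  have Mc: "M \<subseteq> carrier G" using sM subgroup.subset by blast
  have gQ: "group (G Mod M)" by (rule N.factorgroup_is_group)
  have lag: "order (G Mod M) * card M = card (carrier G)"
    using lagrange[OF sM] by (simp add: order_def FactGroup_def)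
  have fM: "finite M" using fin Mc finite_subset by blast
  have cM: "card M > 0" using fM sM subgroup.one_closed card_gt_0_iff by blast
  have o1: "order (G Mod M) \<noteq> 1"
  proof
    assume "order (G Mod M) = 1"
    then have "card M = card (carrier G)" using lag by simp
    then show False using MG Mc fin card_subset_eq by blast
  qed
  then obtain p where p: "Factorial_Ring.prime p" "p dvd order (G Mod M)"
    using prime_factor_nat by blast
  then obtain m where m: "order (G Mod M) = p ^ 1 * m" by auto
  have finQ: "finite (carrier (G Mod M))"
    by (simp add: carrier_FactGroup fin)
  obtain A where A: "subgroup A (G Mod M)" "card A = p ^ 1"
    using sylow_thm[OF p(1) gQ m finQ] by blast
  define K where "K = \<Union>A"
  have sK: "subgroup K G" unfolding K_def using N.factgroup_subgroup_union_subgroup[OF A(1)] .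
  have AK: "A = rcosets\<^bsub>G\<lparr>carrier := K\<rparr>\<^esub> M" unfolding K_def using N.factgroup_subgroup_union_factor[OF A(1)] .
  have "\<one>\<^bsub>G Mod M\<^esub> \<in> A" using A(1) subgroup.one_closed by blast
  then have MK: "M \<subseteq> K" unfolding K_def by auto
  have gK: "group (G\<lparr>carrier := K\<rparr>)" using sK subgroup_imp_group by blast
  have sMK: "subgroup M (G\<lparr>carrier := K\<rparr>)" using subgroup_incl[OF sM sK MK] .
  have l2: "card A * card M = card K"
    using group.lagrange[OF gK sMK] AK by (simp add: order_def)
  have "p > 1" using p(1) prime_gt_1_nat by blast
  then have "card K \<noteq> card M" using l2 A(2) cM by auto
  then have "K = carrier G" using mx[OF sK MK] by blast
  then show ?thesis using l2 A(2) p(1) by (metis power_one_right)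
qed

end

definition bigomega :: "nat \<Rightarrow> nat" where
  "bigomega n = size (prime_factorization n)"

lemma bigomega_mult: "a \<noteq> 0 \<Longrightarrow> b \<noteq> 0 \<Longrightarrow> bigomega (a * b) = bigomega a + bigomega b"
  unfolding bigomega_def by (simp add: prime_factorization_mult)

lemma bigomega_prime: "Factorial_Ring.prime p \<Longrightarrow> bigomega p = 1"
  unfolding bigomega_def by (simp add: prime_factorization_prime)

lemma bigomega_1: "bigomega 1 = 0"
  unfolding bigomega_def by simp

lemma bigomega_ge: "n \<ge> 2 \<Longrightarrow> bigomega n \<ge> 1"
proof -
  assume n: "n \<ge> 2"
  then have "prime_factorization n \<noteq> {#}" using prime_factorization_empty_iff[of n] by simp
  then show ?thesis unfolding bigomega_def by (simp add: Suc_le_eq nonempty_has_size)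
qed

locale fnil = group +
  assumes fin: "finite (carrier G)" and nil: "nilpotent_group G"
begin

lemma max_props:
  assumes "maximal_subgroup G M"
  shows "M \<lhd> G" "subgroup M G" "M \<noteq> carrier G" "M \<subseteq> carrier G"
    "\<And>K. subgroup K G \<Longrightarrow> M \<subseteq> K \<Longrightarrow> K = M \<or> K = carrier G"
  using assms maximal_normal[OF nil assms] unfolding maximal_subgroup_def
  by (auto dest: subgroup.subset)

lemma fin_sub: "subgroup A G \<Longrightarrow> finite A"
  using fin finite_subset subgroup.subset by metis

lemma card_sub_pos: "subgroup A G \<Longrightarrow> card A > 0"
  using fin_sub subgroup.one_closed card_gt_0_iff by blast

lemma index_formula:
  assumes M: "maximal_subgroup G M" and A: "subgroup A G" and AM: "\<not> A \<subseteq> M"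
  shows "card (carrier G) * card (M \<inter> A) = card M * card A"
proof -
  note mp = max_props[OF M]
  interpret second_isomorphism_grp M G A
    using mp(1) A unfolding second_isomorphism_grp_def second_isomorphism_grp_axioms_def by auto
  have s: "subgroup (M <#> A) G" by (rule normal_set_mult_subgroup)
  have "M <#> A \<noteq> M" using S_contained_in_set_mult AM by blast
  then have "M <#> A = carrier G" using mp(5)[OF s H_contained_in_set_mult] by blast
  then show ?thesis using prod_formula[OF mp(1) A fin] by simp
qed

lemma omega_step:
  assumes M: "maximal_subgroup G M" and A: "subgroup A G"
  shows "bigomega (card A) \<le> bigomega (card (A \<inter> M)) + 1"
proof (cases "A \<subseteq> M")
  case True
  then have "A \<inter> M = A" by blast
  then show ?thesis by simp
next
  case False
  note mp = max_props[OF M]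
  obtain p where p: "Factorial_Ring.prime p" "card (carrier G) = p * card M"
    using maximal_prime_index[OF nil fin M] by blast
  have e: "card (carrier G) * card (M \<inter> A) = card M * card A" using index_formula[OF M A False] .
  have cM: "card M > 0" using card_sub_pos mp(2) by blast
  have "card M * (p * card (M \<inter> A)) = card M * card A" using e p(2) by (simp add: ac_simps)
  then have cA: "card A = p * card (A \<inter> M)" using cM by (simp add: Int_commute)
  have "card (A \<inter> M) > 0" using card_sub_pos subgroups_Inter_pair[OF A mp(2)] by blast
  then have "bigomega (card A) = 1 + bigomega (card (A \<inter> M))"
    using cA bigomega_mult[of p "card (A \<inter> M)"] bigomega_prime[OF p(1)] p(1) prime_gt_0_nat by auto
  then show ?thesis by simp
qed

end

context fnil begin

lemma lemmaL:
  assumes Xg: "subgroup Xg G" and M: "maximal_subgroup G M" and N: "maximal_subgroup G N"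
    and XMN: "Xg \<inter> M \<subseteq> N" and XgM: "\<not> Xg \<subseteq> M" and NM: "N \<noteq> M"
  shows "\<exists>N'. maximal_subgroup G N' \<and> Xg \<subseteq> N' \<and> N' \<inter> M \<subseteq> N"
proof -
  note mpM = max_props[OF M] and mpN = max_props[OF N]
  define D where "D = M \<inter> N"
  have nD: "D \<lhd> G" unfolding D_def using normal_subgroup_intersect[OF mpM(1) mpN(1)] .
  interpret second_isomorphism_grp D G Xg
    using nD Xg unfolding second_isomorphism_grp_def second_isomorphism_grp_axioms_def by auto
  define N' where "N' = D <#> Xg"
  have sN': "subgroup N' G" unfolding N'_def by (rule normal_set_mult_subgroup)
  have XN': "Xg \<subseteq> N'" unfolding N'_def by (rule S_contained_in_set_mult)
  have DN': "D \<subseteq> N'" unfolding N'_def by (rule H_contained_in_set_mult)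
  have pf: "card N' * card (D \<inter> Xg) = card D * card Xg"
    unfolding N'_def using prod_formula[OF nD Xg fin] .
  have DX: "D \<inter> Xg = M \<inter> Xg" unfolding D_def using XMN by blast
  have e1: "card (carrier G) * card (M \<inter> Xg) = card M * card Xg" using index_formula[OF M Xg XgM] .
  have NsM: "\<not> N \<subseteq> M" using mpN(5)[OF mpM(2)] mpM(3) NM by blast
  have e2: "card (carrier G) * card D = card M * card N" unfolding D_def using index_formula[OF M mpN(2) NsM] .
  have cG: "card (carrier G) > 0" using card_sub_pos subgroup_self by blast
  have cM: "card M > 0" using card_sub_pos mpM(2) by blast
  have cX: "card Xg > 0" using card_sub_pos Xg by blast
  have "card N' * (card (carrier G) * card (M \<inter> Xg)) = (card (carrier G) * card D) * card Xg"
    using pf DX by (metis mult.assoc mult.commute)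
  then have "card N' * (card M * card Xg) = (card M * card N) * card Xg" using e1 e2 by simp
  then have "(card N') * (card M * card Xg) = (card N) * (card M * card Xg)" by (simp add: ac_simps)
  then have cN': "card N' = card N" using cM cX by simp
  obtain q where q: "Factorial_Ring.prime q" "card (carrier G) = q * card N"
    using maximal_prime_index[OF nil fin N] by blast
  have mN': "maximal_subgroup G N'" using prime_index_maximal[OF sN' fin q(1)] q(2) cN' by simp
  have N'sM: "\<not> N' \<subseteq> M" using XN' XgM by blast
  have e3: "card (carrier G) * card (M \<inter> N') = card M * card N'" using index_formula[OF M sN' N'sM] .
  have "card (carrier G) * card (M \<inter> N') = card (carrier G) * card D" using e3 e2 cN' by simp
  then have "card (M \<inter> N') = card D" using cG by simp
  moreover have "D \<subseteq> M \<inter> N'" using DN' unfolding D_def by blast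
  moreover have "finite (M \<inter> N')" using fin_sub mpM(2) by blast
  ultimately have "M \<inter> N' = D" using card_subset_eq by metis
  then have "N' \<inter> M \<subseteq> N" unfolding D_def by blast
  then show ?thesis using mN' XN' by blast
qed

definition Tc :: "'a set \<Rightarrow> 'a set" where
  "Tc H = carrier G \<inter> \<Inter>{M. maximal_subgroup G M \<and> H \<subseteq> M}"

lemma Tc_subgroup: "subgroup (Tc H) G"
proof -
  have "Tc H = \<Inter>(insert (carrier G) {M. maximal_subgroup G M \<and> H \<subseteq> M})" unfolding Tc_def by simp
  moreover have "subgroup (\<Inter>(insert (carrier G) {M. maximal_subgroup G M \<and> H \<subseteq> M})) G"
    by (rule subgroups_Inter) (auto simp: subgroup_self maximal_subgroup_def)
  ultimately show ?thesis by simp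
qed

lemma Tc_step:
  assumes Xg: "subgroup Xg G" and M: "maximal_subgroup G M" and XgM: "\<not> Xg \<subseteq> M"
  shows "Tc (Xg \<inter> M) = Tc Xg \<inter> M"
proof
  show "Tc (Xg \<inter> M) \<subseteq> Tc Xg \<inter> M" unfolding Tc_def using M by blast
next
  show "Tc Xg \<inter> M \<subseteq> Tc (Xg \<inter> M)"
  proof
    fix x assume x: "x \<in> Tc Xg \<inter> M"
    have "x \<in> N" if N: "maximal_subgroup G N" "Xg \<inter> M \<subseteq> N" for N
    proof (cases "Xg \<subseteq> N")
      case True then show ?thesis using x N unfolding Tc_def by blast
    next
      case False
      show ?thesis
      proof (cases "N = M")
        case True then show ?thesis using x by blast
      next
        case False
        obtain N' where "maximal_subgroup G N'" "Xg \<subseteq> N'" "N' \<inter> M \<subseteq> N"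
          using lemmaL[OF Xg M N(1) N(2) XgM False] by blast
        then show ?thesis using x unfolding Tc_def by blast
      qed
    qed
    then show "x \<in> Tc (Xg \<inter> M)" using x unfolding Tc_def by blast
  qed
qed

end

context group begin

lemma strict_omega:
  assumes fin: "finite (carrier G)" and A: "subgroup A G" and B: "subgroup B G" and BA: "B \<subset> A"
  shows "bigomega (card B) + 1 \<le> bigomega (card A)"
proof -
  have gA: "group (G\<lparr>carrier := A\<rparr>)" using A subgroup_imp_group by blast
  have sBA: "subgroup B (G\<lparr>carrier := A\<rparr>)" using subgroup_incl[OF B A] BA by blast
  have l: "card (rcosets\<^bsub>G\<lparr>carrier := A\<rparr>\<^esub> B) * card B = card A"
    using group.lagrange[OF gA sBA] by (simp add: order_def)
  have fA: "finite A" using fin A finite_subset subgroup.subset by metis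
  have fB: "finite B" using fA BA finite_subset by blast
  have "\<one> \<in> B" using B subgroup.one_closed by blast
  then have cB: "card B > 0" using fB card_gt_0_iff by blast
  have "card B < card A" using fA BA psubset_card_mono by blast
  then have "card (rcosets\<^bsub>G\<lparr>carrier := A\<rparr>\<^esub> B) \<noteq> 0" "card (rcosets\<^bsub>G\<lparr>carrier := A\<rparr>\<^esub> B) \<noteq> 1"
    using l by (auto intro: Nat.gr0I)
  then have "card (rcosets\<^bsub>G\<lparr>carrier := A\<rparr>\<^esub> B) \<ge> 2" by linarith
  then have "bigomega (card (rcosets\<^bsub>G\<lparr>carrier := A\<rparr>\<^esub> B)) \<ge> 1" by (rule bigomega_ge)
  moreover have "bigomega (card A) = bigomega (card (rcosets\<^bsub>G\<lparr>carrier := A\<rparr>\<^esub> B)) + bigomega (card B)"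
    using l[symmetric] cB bigomega_mult \<open>card (rcosets\<^bsub>G\<lparr>carrier := A\<rparr>\<^esub> B) \<ge> 2\<close> by simp
  ultimately show ?thesis by simp
qed

lemma strict_chain_omega:
  assumes fin: "finite (carrier G)" and sub: "\<forall>i < length Hs. subgroup (Hs ! i) G"
    and str: "\<forall>i. Suc i < length Hs \<longrightarrow> Hs ! Suc i \<subset> Hs ! i"
  shows "i < length Hs \<Longrightarrow> bigomega (card (Hs ! i)) + i \<le> bigomega (card (Hs ! 0))"
proof (induction i)
  case 0 then show ?case by simp
next
  case (Suc i)
  have "bigomega (card (Hs ! Suc i)) + 1 \<le> bigomega (card (Hs ! i))"
    using strict_omega[OF fin] sub str Suc.prems by simp
  then show ?case using Suc by simp
qed

end

lemma comp_strict:
  assumes gQ: "group Q" and fQ: "finite (carrier Q)" and cs: "composition_series Q Hs"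
  shows "\<forall>i. Suc i < length Hs \<longrightarrow> Hs ! Suc i \<subset> Hs ! i"
proof (intro allI impI)
  fix i assume i: "Suc i < length Hs"
  have sH: "subgroup (Hs ! i) Q" using cs i unfolding composition_series_def by auto
  have n: "Hs ! Suc i \<lhd> subgroup_generated Q (Hs ! i)"
    and sg: "simple_group (subgroup_generated Q (Hs ! i) Mod (Hs ! Suc i))"
    using cs i unfolding composition_series_def by auto
  have cR: "carrier (subgroup_generated Q (Hs ! i)) = Hs ! i"
    using subgroup.carrier_subgroup_generated_subgroup[OF sH] .
  have sub: "Hs ! Suc i \<subseteq> Hs ! i" using n normal_imp_subgroup subgroup.subset cR by metis
  have fR: "finite (carrier (subgroup_generated Q (Hs ! i)))" using cR sH fQ subgroup.subset finite_subset by metis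
  have "Hs ! Suc i \<noteq> Hs ! i"
  proof
    assume e: "Hs ! Suc i = Hs ! i"
    have "carrier (subgroup_generated Q (Hs ! i) Mod (Hs ! Suc i)) = {\<one>\<^bsub>subgroup_generated Q (Hs ! i) Mod (Hs ! Suc i)\<^esub>}"
      using normal.fact_group_trivial_iff[OF n fR] e cR by simp
    then show False using simple_group.simple_not_triv[OF sg] by simp
  qed
  then show "Hs ! Suc i \<subset> Hs ! i" using sub by blast
qed

theorem mainTheorem4:
  fixes G (structure)
    and \<F> :: "'a set set"
    and Xs :: "'a set list"
  assumes "group G"
    and "finite (carrier G)"
    and "nilpotent_group G"
    and "\<forall>H \<in> \<F>. subgroup H G"
    and "carrier G \<in> \<F>"
    and "\<forall>M. maximal_subgroup G M \<longrightarrow> M \<in> \<F>"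
    and "\<forall>A \<in> \<F>. \<forall>B \<in> \<F>. A \<inter> B \<in> \<F>"
    and "Xs \<noteq> []"
    and "set Xs \<subseteq> \<F>"
    and "\<forall>i. Suc i < length Xs \<longrightarrow> Xs ! Suc i \<subset> Xs ! i"
    and "\<not> (\<exists>Y \<in> \<F>. Y \<notin> set Xs \<and> (\<forall>Z \<in> set Xs. Y \<subseteq> Z \<or> Z \<subseteq> Y))"
  shows "\<forall>Hs. composition_series (G Mod frattini G) Hs \<longrightarrow> length Hs - 1 \<le> length Xs - 1"
proof -
  interpret fnil G using assms(1-3) by (simp add: fnil_def fnil_axioms_def)
  define n where "n = length Xs"
  have n0: "n > 0" using assms(8) n_def by simp
  have chain: "j \<le> i \<Longrightarrow> i < n \<Longrightarrow> Xs ! i \<subseteq> Xs ! j" for j i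
  proof (induction i)
    case 0 then show ?case by simp
  next
    case (Suc i)
    show ?case
    proof (cases "j = Suc i")
      case True then show ?thesis by simp
    next
      case False
      then have "Xs ! i \<subseteq> Xs ! j" using Suc by simp
      moreover have "Xs ! Suc i \<subseteq> Xs ! i" using assms(10) Suc.prems n_def by auto
      ultimately show ?thesis by blast
    qed
  qed
  have inF: "i < n \<Longrightarrow> Xs ! i \<in> \<F>" for i using assms(9) n_def nth_mem by blast
  have sub: "i < n \<Longrightarrow> subgroup (Xs ! i) G" for i using inF assms(4) by blast
  have refine: "\<exists>k < n. Y = Xs ! k" if "Y \<in> \<F>" "\<And>j. j < n \<Longrightarrow> Y \<subseteq> Xs ! j \<or> Xs ! j \<subseteq> Y" for Y
  proof -
    have "\<forall>Z \<in> set Xs. Y \<subseteq> Z \<or> Z \<subseteq> Y"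
    proof
      fix Z assume "Z \<in> set Xs"
      then obtain j where "j < n" "Z = Xs ! j" using n_def by (auto simp: in_set_conv_nth)
      then show "Y \<subseteq> Z \<or> Z \<subseteq> Y" using that(2) by blast
    qed
    then have "Y \<in> set Xs" using assms(11) that(1) by blast
    then show ?thesis using n_def by (auto simp: in_set_conv_nth)
  qed
  have X0: "Xs ! 0 = carrier G"
  proof -
    have "\<And>j. j < n \<Longrightarrow> Xs ! j \<subseteq> carrier G" using sub subgroup.subset by blast
    then obtain k where k: "k < n" "carrier G = Xs ! k" using refine[OF assms(5)] by blast
    then have "carrier G \<subseteq> Xs ! 0" using chain[of 0 k] by simp
    then show ?thesis using sub[OF n0] subgroup.subset by blast
  qed
  have T0: "Tc (Xs ! 0) = carrier G" unfolding Tc_def X0 using max_props(3,4) by blast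
  define t where "t = n - 1"
  have tn: "t < n" using n0 t_def by simp
  have Xt: "Xs ! t \<subseteq> M" if M: "maximal_subgroup G M" for M
  proof -
    have YF: "Xs ! t \<inter> M \<in> \<F>" using assms(6,7) M inF[OF tn] by blast
    have "Xs ! t \<inter> M \<subseteq> Xs ! j" if "j < n" for j
    proof -
      have "j \<le> t" using that t_def by simp
      then show ?thesis using chain[of j t] tn by blast
    qed
    then obtain k where k: "k < n" "Xs ! t \<inter> M = Xs ! k" using refine[OF YF] by blast
    then have "Xs ! t \<subseteq> Xs ! k" using chain[of k t] t_def by simp
    then show ?thesis using k by blast
  qed
  have Tt: "Tc (Xs ! t) = frattini G" unfolding Tc_def frattini_def using Xt by blast
  have step: "bigomega (card (Tc (Xs ! i))) \<le> bigomega (card (Tc (Xs ! Suc i))) + 1" if i: "Suc i < n" for i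
  proof (cases "\<exists>M. maximal_subgroup G M \<and> Xs ! Suc i \<subseteq> M \<and> \<not> Xs ! i \<subseteq> M")
    case True
    then obtain M where M: "maximal_subgroup G M" "Xs ! Suc i \<subseteq> M" "\<not> Xs ! i \<subseteq> M" by blast
    have si: "Xs ! Suc i \<subseteq> Xs ! i" using chain[of i "Suc i"] i by simp
    have YF: "Xs ! i \<inter> M \<in> \<F>" using assms(6,7) M inF i by simp
    have "Xs ! i \<inter> M \<subseteq> Xs ! j \<or> Xs ! j \<subseteq> Xs ! i \<inter> M" if "j < n" for j
    proof (cases "j \<le> i")
      case True then show ?thesis using chain[of j i] i by auto
    next
      case False
      then have "Xs ! j \<subseteq> Xs ! Suc i" using chain[of "Suc i" j] that by simp
      then show ?thesis using si M(2) by blast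
    qed
    then obtain k where k: "k < n" "Xs ! i \<inter> M = Xs ! k" using refine[OF YF] by blast
    have "\<not> k \<le> i"
    proof
      assume "k \<le> i"
      then have "Xs ! i \<subseteq> Xs ! k" using chain[of k i] i by simp
      then show False using k M(3) by blast
    qed
    then have "Xs ! k \<subseteq> Xs ! Suc i" using chain[of "Suc i" k] k by simp
    then have eq: "Xs ! Suc i = Xs ! i \<inter> M" using k si M(2) by blast
    have "Tc (Xs ! Suc i) = Tc (Xs ! i) \<inter> M" unfolding eq using Tc_step[OF sub M(1) M(3)] i by simp
    then show ?thesis using omega_step[OF M(1) Tc_subgroup] by simp
  next
    case False
    have si: "Xs ! Suc i \<subseteq> Xs ! i" using chain[of i "Suc i"] i by simp
    have "Tc (Xs ! i) = Tc (Xs ! Suc i)" unfolding Tc_def using False si by blast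
    then show ?thesis by simp
  qed
  have acc: "bigomega (card (Tc (Xs ! 0))) \<le> bigomega (card (Tc (Xs ! i))) + i" if "i < n" for i
    using that
  proof (induction i)
    case 0 then show ?case by simp
  next
    case (Suc i)
    then show ?case using step[OF Suc.prems] by simp
  qed
  have main1: "bigomega (card (carrier G)) \<le> bigomega (card (frattini G)) + t"
    using acc[OF tn] T0 Tt by simp
  have sPhi: "subgroup (frattini G) G"
  proof -
    have "frattini G = Tc {}" unfolding Tc_def frattini_def by simp
    then show ?thesis using Tc_subgroup by simp
  qed
  have nPhi: "frattini G \<lhd> G"
    unfolding normal_inv_iff
  proof (intro conjI sPhi ballI)
    fix x h assume x: "x \<in> carrier G" and h: "h \<in> frattini G"
    have "x \<otimes> h \<otimes> inv x \<in> M" if M: "maximal_subgroup G M" for M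
    proof -
      have "h \<in> M" using h M unfolding frattini_def by blast
      then show ?thesis using max_props(1)[OF M] x normal_inv_iff by blast
    qed
    moreover have "x \<otimes> h \<otimes> inv x \<in> carrier G" using x h sPhi subgroup.subset by blast
    ultimately show "x \<otimes> h \<otimes> inv x \<in> frattini G" unfolding frattini_def by blast
  qed
  define Q where "Q = G Mod frattini G"
  have gQ: "group Q" unfolding Q_def using normal.factorgroup_is_group[OF nPhi] .
  have lagQ: "card (carrier Q) * card (frattini G) = card (carrier G)"
    using lagrange[OF sPhi] by (simp add: order_def FactGroup_def Q_def)
  have fQ: "finite (carrier Q)" unfolding Q_def by (simp add: carrier_FactGroup fin)
  have cPhi: "card (frattini G) > 0" using card_sub_pos sPhi by blast
  have cQ: "card (carrier Q) > 0" using lagQ card_sub_pos subgroup_self by (metis mult_0 neq0_conv)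
  have "bigomega (card (carrier G)) = bigomega (card (carrier Q)) + bigomega (card (frattini G))"
    using lagQ[symmetric] bigomega_mult cPhi cQ by simp
  then have main2: "bigomega (card (carrier Q)) \<le> t" using main1 by simp
  show ?thesis
  proof (intro allI impI)
    fix Hs assume cs: "composition_series (G Mod frattini G) Hs"
    then have cs': "composition_series Q Hs" unfolding Q_def .
    have str: "\<forall>i. Suc i < length Hs \<longrightarrow> Hs ! Suc i \<subset> Hs ! i" using comp_strict[OF gQ fQ cs'] .
    have subs: "\<forall>i < length Hs. subgroup (Hs ! i) Q" using cs' unfolding composition_series_def by blast
    have ne: "Hs \<noteq> []" and hd: "hd Hs = carrier Q" using cs' unfolding composition_series_def by auto
    have H0: "Hs ! 0 = carrier Q" using ne hd by (simp add: hd_conv_nth)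
    have "bigomega (card (Hs ! (length Hs - 1))) + (length Hs - 1) \<le> bigomega (card (Hs ! 0))"
      using group.strict_chain_omega[OF gQ fQ subs str] ne by simp
    then have "length Hs - 1 \<le> bigomega (card (carrier Q))" using H0 by simp
    then show "length Hs - 1 \<le> length Xs - 1" using main2 t_def n_def by simp
  qed
qed

end
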